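(* Let $n\ge1$ and \[P^n=\Big\{x\in[0,4]^n:\sum_{i\in S}x_i+\sum_{i\notin S}(4-x_i)\ge\tfrac12\ \ \forall S\subseteq\{1,\dots,n\}\Big\},\] with all variables integer. Then every complete branch-and-bound tree for $P^n\cap\mathbb{Z}^n$ (with root label $[0,4]^n$) has at least $2\cdot2^n-1$ leaf nodes.
   Context: A branch-and-bound tree for $P^n\cap\mathbb{Z}^n$ is a rooted binary tree whose nodes are labeled by polyhedra: the root is labeled $[0,4]^n$, and each non-leaf node labeled $D'$ has exactly two children labeled $D'\cap\{x:x_i\le t\}$ and $D'\cap\{x:x_i\ge t+1\}$ for some $i\in\{1,\dots,n\}$ and $t\in\mathbb{Z}$. The tree is complete if $\mathrm{conv}(P^n\cap\mathbb{Z}^n)=\mathrm{conv}\big(\bigcup_{N\text{ leaf}}(N\cap P^n)\big)$. The size of a tree is its number of leaf nodes. *)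

theory Defs
  imports "HOL-Analysis.Analysis"
begin

text \<open>Points of R^n are vectors of type real^'n, with n = CARD('n).
  A branch-and-bound tree records, at each inner node, the branching variable i
  and the integer threshold t; the labels of the nodes are computed from the root label.\<close>

datatype 'n bbtree = Leaf | Branch 'n int "'n bbtree" "'n bbtree"

fun bb_size :: "'n bbtree \<Rightarrow> nat" where
  "bb_size Leaf = 1"
| "bb_size (Branch i t l r) = bb_size l + bb_size r"

fun bb_leaf_labels :: "(real^'n) set \<Rightarrow> 'n bbtree \<Rightarrow> (real^'n) set set" where
  "bb_leaf_labels D Leaf = {D}"
| "bb_leaf_labels D (Branch i t l r) =
     bb_leaf_labels (D \<inter> {x. x $ i \<le> of_int t}) l \<union>
     bb_leaf_labels (D \<inter> {x. x $ i \<ge> of_int t + 1}) r"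

definition box04 :: "(real^'n) set" where
  "box04 = {x. \<forall>i. 0 \<le> x $ i \<and> x $ i \<le> 4}"

definition integer_points :: "(real^'n) set" where
  "integer_points = {x. \<forall>i. x $ i \<in> \<int>}"

definition Pn :: "(real^'n) set" where
  "Pn = {x \<in> box04. \<forall>S::'n set.
          (\<Sum>i\<in>S. x $ i) + (\<Sum>i\<in>- S. 4 - x $ i) \<ge> 1/2}"

definition bb_complete :: "(real^'n) set \<Rightarrow> 'n bbtree \<Rightarrow> bool" where
  "bb_complete P T \<longleftrightarrow>
     convex hull (P \<inter> integer_points) =
     convex hull (\<Union>N\<in>bb_leaf_labels box04 T. N \<inter> P)"

end

theory Submission
  imports Defs
begin

definition ibox :: "('n \<Rightarrow> int) \<Rightarrow> ('n \<Rightarrow> int) \<Rightarrow> (real^'n) set" where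
  "ibox lo hi = {x. \<forall>j. of_int (lo j) \<le> x$j \<and> x$j \<le> of_int (hi j)}"

definition acnt :: "('n \<Rightarrow> int) \<Rightarrow> ('n \<Rightarrow> int) \<Rightarrow> 'n \<Rightarrow> int" where
  "acnt lo hi j = of_bool (lo j \<le> 0 \<and> 0 \<le> hi j) + of_bool (lo j \<le> 4 \<and> 4 \<le> hi j)"

definition midc :: "('n \<Rightarrow> int) \<Rightarrow> ('n \<Rightarrow> int) \<Rightarrow> 'n \<Rightarrow> bool" where
  "midc lo hi j = (max (lo j) 1 \<le> min (hi j) 3)"

definition Vc :: "('n::finite \<Rightarrow> int) \<Rightarrow> ('n \<Rightarrow> int) \<Rightarrow> int" where
  "Vc lo hi = (\<Prod>j\<in>UNIV. acnt lo hi j)"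

definition sc :: "('n \<Rightarrow> int) \<Rightarrow> ('n \<Rightarrow> int) \<Rightarrow> int" where
  "sc lo hi = of_bool (\<exists>j. acnt lo hi j = 1 \<and> midc lo hi j)"

lemma ibox_left: fixes lo hi :: "'n::finite \<Rightarrow> int" shows "ibox lo hi \<inter> {x. x$i \<le> of_int t} = ibox lo (hi(i := min (hi i) t))"
proof (intro set_eqI iffI)
  fix x :: "real^'n"
  assume "x \<in> ibox lo hi \<inter> {x. x$i \<le> of_int t}"
  then have a: "\<forall>j. of_int (lo j) \<le> x$j \<and> x$j \<le> of_int (hi j)" and b: "x$i \<le> of_int t"
    unfolding ibox_def by blast+
  have "of_int (lo j) \<le> x$j \<and> x$j \<le> of_int ((hi(i := min (hi i) t)) j)" for j
    using a b by (cases "j = i") (simp_all add: of_int_min)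
  then show "x \<in> ibox lo (hi(i := min (hi i) t))" unfolding ibox_def by blast
next
  fix x :: "real^'n"
  assume "x \<in> ibox lo (hi(i := min (hi i) t))"
  then have a: "\<forall>j. of_int (lo j) \<le> x$j \<and> x$j \<le> of_int ((hi(i := min (hi i) t)) j)"
    unfolding ibox_def by blast
  have "of_int (lo j) \<le> x$j \<and> x$j \<le> of_int (hi j)" for j
    using a[rule_format, of j] by (cases "j = i") (simp_all add: of_int_min)
  moreover have "x$i \<le> of_int t" using a[rule_format, of i] by (simp add: of_int_min)
  ultimately show "x \<in> ibox lo hi \<inter> {x. x$i \<le> of_int t}" unfolding ibox_def by blast
qed
lemma ibox_right: fixes lo hi :: "'n::finite \<Rightarrow> int" shows "ibox lo hi \<inter> {x. x$i \<ge> of_int t + 1} = ibox (lo(i := max (lo i) (t+1))) hi"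
proof (intro set_eqI iffI)
  fix x :: "real^'n"
  assume "x \<in> ibox lo hi \<inter> {x. x$i \<ge> of_int t + 1}"
  then have a: "\<forall>j. of_int (lo j) \<le> x$j \<and> x$j \<le> of_int (hi j)" and b: "x$i \<ge> of_int t + 1"
    unfolding ibox_def by blast+
  have "of_int ((lo(i := max (lo i) (t+1))) j) \<le> x$j \<and> x$j \<le> of_int (hi j)" for j
    using a b by (cases "j = i") (simp_all add: of_int_max)
  then show "x \<in> ibox (lo(i := max (lo i) (t+1))) hi" unfolding ibox_def by blast
next
  fix x :: "real^'n"
  assume "x \<in> ibox (lo(i := max (lo i) (t+1))) hi"
  then have a: "\<forall>j. of_int ((lo(i := max (lo i) (t+1))) j) \<le> x$j \<and> x$j \<le> of_int (hi j)"
    unfolding ibox_def by blast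
  have "of_int (lo j) \<le> x$j \<and> x$j \<le> of_int (hi j)" for j
    using a[rule_format, of j] by (cases "j = i") (simp_all add: of_int_max)
  moreover have "x$i \<ge> of_int t + 1" using a[rule_format, of i] by (simp add: of_int_max)
  ultimately show "x \<in> ibox lo hi \<inter> {x. x$i \<ge> of_int t + 1}" unfolding ibox_def by blast
qed

lemma convex_g:
  fixes S :: "'n::finite set"
  shows "convex {x::real^'n. c \<le> (\<Sum>k\<in>S. x$k) + (\<Sum>k\<in>-S. 4 - x$k)}"
  unfolding convex_def
proof (intro ballI allI impI)
  fix x y :: "real^'n" and u v :: real
  assume x: "x \<in> {x::real^'n. c \<le> (\<Sum>k\<in>S. x$k) + (\<Sum>k\<in>-S. 4 - x$k)}"
     and y: "y \<in> {x::real^'n. c \<le> (\<Sum>k\<in>S. x$k) + (\<Sum>k\<in>-S. 4 - x$k)}"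
     and u: "0 \<le> u" and v: "0 \<le> v" and uv: "u + v = 1"
  have e1: "(\<Sum>k\<in>S. (u *\<^sub>R x + v *\<^sub>R y)$k) = u * (\<Sum>k\<in>S. x$k) + v * (\<Sum>k\<in>S. y$k)"
    by (simp add: sum.distrib sum_distrib_left)
  have "(\<Sum>k\<in>-S. 4 - (u *\<^sub>R x + v *\<^sub>R y)$k) = (\<Sum>k\<in>-S. u * (4 - x$k) + v * (4 - y$k))"
    by (rule sum.cong) (use uv in \<open>auto simp: algebra_simps\<close>)
  also have "\<dots> = u * (\<Sum>k\<in>-S. 4 - x$k) + v * (\<Sum>k\<in>-S. 4 - y$k)"
    by (simp add: sum.distrib sum_distrib_left)
  finally have e2: "(\<Sum>k\<in>-S. 4 - (u *\<^sub>R x + v *\<^sub>R y)$k) = u * (\<Sum>k\<in>-S. 4 - x$k) + v * (\<Sum>k\<in>-S. 4 - y$k)" .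
  have "u * c + v * c \<le> u * ((\<Sum>k\<in>S. x$k) + (\<Sum>k\<in>-S. 4 - x$k)) + v * ((\<Sum>k\<in>S. y$k) + (\<Sum>k\<in>-S. 4 - y$k))"
    using x y u v by (simp add: add_mono mult_left_mono)
  moreover have "u * c + v * c = c" using uv by (metis distrib_right mult_1)
  ultimately have cc: "c \<le> u * ((\<Sum>k\<in>S. x$k) + (\<Sum>k\<in>-S. 4 - x$k)) + v * ((\<Sum>k\<in>S. y$k) + (\<Sum>k\<in>-S. 4 - y$k))" by linarith
  have eq: "u * ((\<Sum>k\<in>S. x$k) + (\<Sum>k\<in>-S. 4 - x$k)) + v * ((\<Sum>k\<in>S. y$k) + (\<Sum>k\<in>-S. 4 - y$k))
      = (\<Sum>k\<in>S. (u *\<^sub>R x + v *\<^sub>R y)$k) + (\<Sum>k\<in>-S. 4 - (u *\<^sub>R x + v *\<^sub>R y)$k)"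
      unfolding e1 e2 by (simp only: distrib_left add_ac)
  show "u *\<^sub>R x + v *\<^sub>R y \<in> {x::real^'n. c \<le> (\<Sum>k\<in>S. x$k) + (\<Sum>k\<in>-S. 4 - x$k)}"
    unfolding mem_Collect_eq using cc eq by linarith
qed

lemma sum_split_if:
  fixes f g :: "'n::finite \<Rightarrow> real"
  shows "(\<Sum>k\<in>S. f k) + (\<Sum>k\<in>-S. g k) = (\<Sum>k\<in>UNIV. if k \<in> S then f k else g k)"
  by (simp add: sum.If_cases Compl_eq_Diff_UNIV)


lemma acnt_ge0: "acnt lo hi j \<ge> 0" by (simp add: acnt_def)
lemma sc_le1: "sc lo hi \<le> 1" by (simp add: sc_def)
lemma sc_ge0: "sc lo hi \<ge> 0" by (simp add: sc_def)
lemma Vc_ge0: "Vc lo hi \<ge> 0" by (simp add: Vc_def acnt_ge0 prod_nonneg)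

lemma hull_ge1:
  fixes S :: "'n::finite set"
  shows "convex hull (Pn \<inter> integer_points) \<subseteq> {x::real^'n. 1 \<le> (\<Sum>k\<in>S. x$k) + (\<Sum>k\<in>-S. 4 - x$k)}"
proof (rule hull_minimal)
  show "convex {x::real^'n. 1 \<le> (\<Sum>k\<in>S. x$k) + (\<Sum>k\<in>-S. 4 - x$k)}" by (rule convex_g)
  show "Pn \<inter> integer_points \<subseteq> {x::real^'n. 1 \<le> (\<Sum>k\<in>S. x$k) + (\<Sum>k\<in>-S. 4 - x$k)}"
  proof
    fix x :: "real^'n" assume x: "x \<in> Pn \<inter> integer_points"
    let ?g = "(\<Sum>k\<in>S. x$k) + (\<Sum>k\<in>-S. 4 - x$k)"
    have "x \<in> Pn" using x by blast
    then have "\<forall>S::'n set. (\<Sum>i\<in>S. x $ i) + (\<Sum>i\<in>- S. 4 - x $ i) \<ge> 1/2"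
      unfolding Pn_def by blast
    then have h: "?g \<ge> 1/2" by blast
    have xi: "x$k \<in> \<int>" for k using x unfolding integer_points_def by blast
    have "?g \<in> \<int>"
      by (intro Ints_add Ints_sum Ints_diff Ints_numeral xi)
    then obtain m where m: "?g = of_int m" by (auto elim: Ints_cases)
    with h have "m \<ge> 1" by linarith
    with m show "x \<in> {x::real^'n. 1 \<le> (\<Sum>k\<in>S. x$k) + (\<Sum>k\<in>-S. 4 - x$k)}" by simp
  qed
qed

lemma leaf_bound:
  fixes lo hi :: "'n::finite \<Rightarrow> int"
  assumes sub: "ibox lo hi \<inter> Pn \<subseteq> convex hull (Pn \<inter> integer_points)"
    and bnd: "\<And>j. 0 \<le> lo j \<and> hi j \<le> 4"
  shows "2 * Vc lo hi - 1 + sc lo hi \<le> 1"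
proof (cases "Vc lo hi = 0")
  case True then show ?thesis using sc_le1[of lo hi] by simp
next
  case False
  have a: "acnt lo hi j \<noteq> 0" for j using False by (auto simp: Vc_def)
  define v :: "real^'n" where "v = (\<chi> k. if lo k \<le> 0 \<and> 0 \<le> hi k then 0 else 4)"
  have v04: "v$k = 0 \<or> v$k = 4" for k by (simp add: v_def)
  have vin: "of_int (lo k) \<le> v$k \<and> v$k \<le> of_int (hi k)" for k
    using a[of k] by (auto simp: v_def acnt_def)
  have eq: "lo j = hi j" for j
  proof (rule ccontr)
    assume ne: "lo j \<noteq> hi j"
    have "lo j \<le> hi j" using vin[of j] by linarith
    with ne have lt: "lo j + 1 \<le> hi j" by simp
    define p :: "real^'n" where "p = (\<chi> k. if k = j then (if v$j = 0 then 1/2 else 7/2) else v$k)"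
    define S where "S = {k. v$k = 0}"
    have pin: "p \<in> ibox lo hi"
    proof -
      have "of_int (lo k) \<le> p$k \<and> p$k \<le> of_int (hi k)" for k
      proof (cases "k = j")
        case True
        have c1: "(1::real) \<le> of_int (hi j)" if "v$j = 0"
        proof -
          have "lo j \<le> 0" using that by (auto simp: v_def split: if_splits)
          then have "hi j \<ge> 1" using lt bnd[of j] by linarith
          then show ?thesis by simp
        qed
        have c2: "of_int (lo j) \<le> (3::real)" if "v$j = 4"
        proof -
          have "\<not> (lo j \<le> 0 \<and> 0 \<le> hi j)" using that by (auto simp: v_def split: if_splits)
          then have "hi j \<ge> 4" using a[of j] by (auto simp: acnt_def)
          then have "lo j \<le> 3" using lt bnd[of j] by linarith
          then show ?thesis by simp
        qed
        show ?thesis using True vin[of j] v04[of j] c1 c2 by (auto simp: p_def)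
      next
        case False then show ?thesis using vin[of k] by (simp add: p_def)
      qed
      then show ?thesis by (simp add: ibox_def)
    qed
    have p04: "0 \<le> p$k \<and> p$k \<le> 4" for k using v04[of k] by (auto simp: p_def)
    have pP: "p \<in> Pn"
    proof -
      have "(\<Sum>i\<in>S'. p $ i) + (\<Sum>i\<in>- S'. 4 - p $ i) \<ge> 1/2" for S'
      proof -
        let ?h = "\<lambda>k. if k \<in> S' then p$k else 4 - p$k"
        have "?h j \<le> sum ?h UNIV"
          by (rule member_le_sum) (use p04 in auto)
        moreover have "?h j \<ge> 1/2" using v04[of j] by (auto simp: p_def)
        ultimately show ?thesis by (simp add: sum_split_if)
      qed
      then show ?thesis using p04 by (simp add: Pn_def box04_def)
    qed
    have "(\<Sum>k\<in>S. p$k) + (\<Sum>k\<in>-S. 4 - p$k) = (\<Sum>k\<in>UNIV. if k = j then 1/2 else 0)"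
      unfolding sum_split_if
      by (rule sum.cong) (use v04 in \<open>auto simp: p_def S_def\<close>)
    also have "\<dots> = 1/2" by simp
    finally have gp: "(\<Sum>k\<in>S. p$k) + (\<Sum>k\<in>-S. 4 - p$k) = 1/2" .
    have "p \<in> convex hull (Pn \<inter> integer_points)" using sub pin pP by blast
    with hull_ge1[of S] have "1 \<le> (\<Sum>k\<in>S. p$k) + (\<Sum>k\<in>-S. 4 - p$k)" by blast
    with gp show False by simp
  qed
  have a1: "acnt lo hi j = 1" and nm: "\<not> midc lo hi j" for j
    using a[of j] eq[of j] by (auto simp: acnt_def midc_def of_bool_def split: if_splits)
  have "Vc lo hi = 1" by (simp add: Vc_def a1)
  moreover have "sc lo hi = 0" by (simp add: sc_def nm)
  ultimately show ?thesis by simp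
qed


definition acs :: "int \<Rightarrow> int \<Rightarrow> int" where
  "acs l h = of_bool (l \<le> 0 \<and> 0 \<le> h) + of_bool (l \<le> 4 \<and> 4 \<le> h)"

definition mids :: "int \<Rightarrow> int \<Rightarrow> bool" where
  "mids l h = (max l 1 \<le> min h 3)"

lemma acnt_eq: "acnt lo hi j = acs (lo j) (hi j)" by (simp add: acnt_def acs_def)
lemma midc_eq: "midc lo hi j = mids (lo j) (hi j)" by (simp add: midc_def mids_def)

lemma acs_split: "acs l h = acs l (min h t) + acs (max l (t+1)) h"
  by (simp add: acs_def of_bool_def min_def max_def)

lemma acs_both:
  assumes "acs l (min h t) \<noteq> 0" "acs (max l (t+1)) h \<noteq> 0"
  shows "acs l (min h t) = 1 \<and> acs (max l (t+1)) h = 1 \<and> (mids l (min h t) \<or> mids (max l (t+1)) h)"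
  using assms by (simp add: acs_def mids_def of_bool_def min_def max_def split: if_splits)

lemma Vc_remove:
  fixes lo hi :: "'n::finite \<Rightarrow> int"
  shows "Vc lo hi = acnt lo hi i * (\<Prod>j\<in>UNIV - {i}. acnt lo hi j)"
  unfolding Vc_def by (rule prod.remove) auto

lemma step_bound:
  fixes lo hi :: "'n::finite \<Rightarrow> int" and L R t :: int and i :: 'n
  defines "hi1 \<equiv> hi(i := min (hi i) t)" and "lo2 \<equiv> lo(i := max (lo i) (t+1))"
  assumes l: "2 * Vc lo hi1 - 1 + sc lo hi1 \<le> L"
    and r: "2 * Vc lo2 hi - 1 + sc lo2 hi \<le> R"
    and L1: "L \<ge> 1" and R1: "R \<ge> 1"
  shows "2 * Vc lo hi - 1 + sc lo hi \<le> L + R"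
proof -
  have o1: "acnt lo hi1 j = acnt lo hi j" "midc lo hi1 j = midc lo hi j" if "j \<noteq> i" for j
    using that by (simp_all add: hi1_def acnt_def midc_def)
  have o2: "acnt lo2 hi j = acnt lo hi j" "midc lo2 hi j = midc lo hi j" if "j \<noteq> i" for j
    using that by (simp_all add: lo2_def acnt_def midc_def)
  define P where "P = (\<Prod>j\<in>UNIV - {i}. acnt lo hi j)"
  have P1: "(\<Prod>j\<in>UNIV - {i}. acnt lo hi1 j) = P" unfolding P_def
    by (rule prod.cong) (auto simp: o1)
  have P2: "(\<Prod>j\<in>UNIV - {i}. acnt lo2 hi j) = P" unfolding P_def
    by (rule prod.cong) (auto simp: o2)
  have ai1: "acnt lo hi1 i = acs (lo i) (min (hi i) t)" by (simp add: acnt_eq hi1_def)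
  have ai2: "acnt lo2 hi i = acs (max (lo i) (t+1)) (hi i)" by (simp add: acnt_eq lo2_def)
  have ai: "acnt lo hi i = acnt lo hi1 i + acnt lo2 hi i"
    unfolding ai1 ai2 acnt_eq[of lo hi i] by (rule acs_split)
  have V1: "Vc lo hi1 = acnt lo hi1 i * P" using Vc_remove[of lo hi1 i] P1 by simp
  have V2: "Vc lo2 hi = acnt lo2 hi i * P" using Vc_remove[of lo2 hi i] P2 by simp
  have V: "Vc lo hi = acnt lo hi i * P" using Vc_remove[of lo hi i] P_def by simp
  have VV: "Vc lo hi = Vc lo hi1 + Vc lo2 hi" unfolding V V1 V2 ai by (simp add: algebra_simps)
  have s1: "0 \<le> sc lo hi1" "sc lo hi1 \<le> 1" "0 \<le> sc lo2 hi" "sc lo2 hi \<le> 1" "0 \<le> sc lo hi" "sc lo hi \<le> 1"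
    by (simp_all add: sc_def)
  show ?thesis
  proof (cases "Vc lo hi1 = 0 \<or> Vc lo2 hi = 0")
    case True
    then show ?thesis using l r L1 R1 VV s1 by auto
  next
    case False
    then have n1: "acnt lo hi1 i \<noteq> 0" and n2: "acnt lo2 hi i \<noteq> 0" using V1 V2 by auto
    from acs_both[of "lo i" "hi i" t] n1 n2 ai1 ai2
    have b: "acnt lo hi1 i = 1 \<and> acnt lo2 hi i = 1 \<and> (midc lo hi1 i \<or> midc lo2 hi i)"
      by (simp only: midc_eq hi1_def lo2_def fun_upd_same) metis
    then have A: "sc lo hi1 + sc lo2 hi \<ge> 1" by (auto simp: sc_def)
    have B: "sc lo hi1 = 1 \<and> sc lo2 hi = 1" if "sc lo hi = 1"
    proof -
      from that obtain j where j: "acnt lo hi j = 1" "midc lo hi j" by (auto simp: sc_def split: if_splits)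
      have "j \<noteq> i" using j(1) ai b by auto
      then have "acnt lo hi1 j = 1 \<and> midc lo hi1 j" "acnt lo2 hi j = 1 \<and> midc lo2 hi j"
        using j o1 o2 by auto
      then show ?thesis unfolding sc_def by auto
    qed
    have "sc lo hi + 1 \<le> sc lo hi1 + sc lo2 hi"
    proof (cases "sc lo hi = 1")
      case True then show ?thesis using B by simp
    next
      case False then have "sc lo hi = 0" by (simp add: sc_def)
      then show ?thesis using A by simp
    qed
    then show ?thesis using l r VV by linarith
  qed
qed


lemma bb_size_ge1: "bb_size T \<ge> 1"
  by (induction T) auto

lemma main_bound:
  fixes T :: "'n::finite bbtree"
  shows "\<forall>lo hi. (\<forall>j. 0 \<le> lo j \<and> hi j \<le> 4) \<longrightarrow>
    (\<forall>N\<in>bb_leaf_labels (ibox lo hi) T. N \<inter> Pn \<subseteq> convex hull (Pn \<inter> integer_points)) \<longrightarrow>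
    2 * Vc lo hi - 1 + sc lo hi \<le> int (bb_size T)"
proof (induction T)
  case Leaf
  show ?case
  proof (intro allI impI)
    fix lo hi :: "'n \<Rightarrow> int"
    assume b: "\<forall>j. 0 \<le> lo j \<and> hi j \<le> 4"
      and h: "\<forall>N\<in>bb_leaf_labels (ibox lo hi) Leaf. N \<inter> Pn \<subseteq> convex hull (Pn \<inter> integer_points)"
    have "2 * Vc lo hi - 1 + sc lo hi \<le> 1"
      by (rule leaf_bound) (use h b in auto)
    then show "2 * Vc lo hi - 1 + sc lo hi \<le> int (bb_size Leaf)" by simp
  qed
next
  case (Branch i t l r)
  show ?case
  proof (intro allI impI)
    fix lo hi :: "'n \<Rightarrow> int"
    assume b: "\<forall>j. 0 \<le> lo j \<and> hi j \<le> 4"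
      and h: "\<forall>N\<in>bb_leaf_labels (ibox lo hi) (Branch i t l r). N \<inter> Pn \<subseteq> convex hull (Pn \<inter> integer_points)"
    have eqL: "bb_leaf_labels (ibox lo hi) (Branch i t l r) = bb_leaf_labels (ibox lo (hi(i := min (hi i) t))) l \<union> bb_leaf_labels (ibox (lo(i := max (lo i) (t+1))) hi) r"
      by (simp only: bb_leaf_labels.simps ibox_left ibox_right)
    have hl: "\<forall>N\<in>bb_leaf_labels (ibox lo (hi(i := min (hi i) t))) l. N \<inter> Pn \<subseteq> convex hull (Pn \<inter> integer_points)"
      using h unfolding eqL by blast
    have hr: "\<forall>N\<in>bb_leaf_labels (ibox (lo(i := max (lo i) (t+1))) hi) r. N \<inter> Pn \<subseteq> convex hull (Pn \<inter> integer_points)"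
      using h unfolding eqL by blast
    have b1: "\<forall>j. 0 \<le> lo j \<and> (hi(i := min (hi i) t)) j \<le> 4"
    proof
      fix j show "0 \<le> lo j \<and> (hi(i := min (hi i) t)) j \<le> 4"
        using b[rule_format, of j] by (cases "j = i") (simp_all add: min_le_iff_disj le_max_iff_disj)
    qed
    have b2: "\<forall>j. 0 \<le> (lo(i := max (lo i) (t+1))) j \<and> hi j \<le> 4"
    proof
      fix j show "0 \<le> (lo(i := max (lo i) (t+1))) j \<and> hi j \<le> 4"
        using b[rule_format, of j] by (cases "j = i") (simp_all add: min_le_iff_disj le_max_iff_disj)
    qed
    have L: "2 * Vc lo (hi(i := min (hi i) t)) - 1 + sc lo (hi(i := min (hi i) t)) \<le> int (bb_size l)"
      using Branch.IH(1) b1 hl by blast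
    have R: "2 * Vc (lo(i := max (lo i) (t+1))) hi - 1 + sc (lo(i := max (lo i) (t+1))) hi \<le> int (bb_size r)"
      using Branch.IH(2) b2 hr by blast
    have "2 * Vc lo hi - 1 + sc lo hi \<le> int (bb_size l) + int (bb_size r)"
      by (rule step_bound[OF L R]) (use bb_size_ge1[of l] bb_size_ge1[of r] in auto)
    then show "2 * Vc lo hi - 1 + sc lo hi \<le> int (bb_size (Branch i t l r))" by simp
  qed
qed

theorem proposition7:
  fixes T :: "'n::finite bbtree"
  assumes "bb_complete (Pn :: (real^'n) set) T"
  shows "bb_size T \<ge> 2 * 2 ^ CARD('n) - 1"
proof -
  have root: "box04 = ibox (\<lambda>_::'n. 0) (\<lambda>_. 4)"
    by (simp only: box04_def ibox_def of_int_0 of_int_numeral)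
  have hsub: "\<forall>N\<in>bb_leaf_labels (ibox (\<lambda>_::'n. 0) (\<lambda>_. 4)) T. N \<inter> Pn \<subseteq> convex hull (Pn \<inter> integer_points)"
  proof
    fix N assume "N \<in> bb_leaf_labels (ibox (\<lambda>_::'n. 0) (\<lambda>_. 4)) T"
    then have "N \<in> bb_leaf_labels box04 T" by (simp only: root)
    then have "N \<inter> Pn \<subseteq> (\<Union>N\<in>bb_leaf_labels box04 T. N \<inter> Pn)" by blast
    also have "\<dots> \<subseteq> convex hull (\<Union>N\<in>bb_leaf_labels box04 T. N \<inter> Pn)" by (rule hull_subset)
    also have "\<dots> = convex hull (Pn \<inter> integer_points)" using assms unfolding bb_complete_def by (rule sym)
    finally show "N \<inter> Pn \<subseteq> convex hull (Pn \<inter> integer_points)" .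
  qed
  have a2: "acnt (\<lambda>_::'n. 0) (\<lambda>_. 4) j = 2" for j by (simp add: acnt_def)
  have V: "Vc (\<lambda>_::'n. 0) (\<lambda>_. 4) = 2 ^ CARD('n)" by (simp add: Vc_def a2)
  have S: "sc (\<lambda>_::'n. 0) (\<lambda>_. 4) = 0" by (simp add: sc_def a2)
  have "2 * Vc (\<lambda>_::'n. 0) (\<lambda>_. 4) - 1 + sc (\<lambda>_::'n. 0) (\<lambda>_. 4) \<le> int (bb_size T)"
    by (rule mp[OF mp[OF main_bound[of T, THEN spec, THEN spec]] hsub]) simp
  then have "2 * 2 ^ CARD('n) - 1 \<le> int (bb_size T)" using V S by simp
  moreover have "(1::nat) \<le> 2 * 2 ^ CARD('n)" by simp
  ultimately have "int (2 * 2 ^ CARD('n) - 1) \<le> int (bb_size T)" by (simp add: of_nat_diff)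
  then show ?thesis by (simp only: of_nat_le_iff)
qed

end
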